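(* For every well-typed CorePolyC program $p$ there is a polynomial $q$ such that $\mathrm{sz}([\![p]\!](\tilde v))\le q(\mathrm{sz}(\tilde v))$ for every input tuple $\tilde v$.
   Context: CorePolyC. Types are $\mathtt{iint},\mathtt{int},\mathtt{bool}$; $\mathsf{Int}=\{\mathtt{iint},\mathtt{int}\}$, ordered by $\mathtt{iint}\preccurlyeq\mathtt{int}$. Values are unbounded integers ($\mathbb Z$) and booleans $\#t,\#f$. Expressions: variables $x$; constants (nonempty decimal digit strings denoting natural numbers; $\mathtt{true}$, $\mathtt{false}$); operator applications $\mathtt{op}(e_1,\dots,e_m)$; parenthesized $(e)$. Operators and semantics: unary $-$ (negation); binary $+,-,/,\%$ (integer addition, subtraction, division, remainder, with division and remainder by $0$ returning $0$); $\mathtt{size}$, with $\mathtt{size}(v)=\lceil\log_2(\mathrm{abs}(v)+1)\rceil$; comparisons $\texttt{>=},\texttt{<=},\texttt{>},\texttt{<},\texttt{==},\texttt{!=}$ on integers returning booleans; boolean $\texttt{!},\texttt{\&\&},\texttt{||}$. Statements: declaration $t\ x;$; assignment $x=e;$; block $\{s_1\dots s_m\}$; conditional $\mathbf{if}(e)\ s_1\ \mathbf{else}\ s_2$; loop $\mathbf{for}(x<\mathtt{size}(e))\ s$ (loop bounds are always syntactically of the form $\mathtt{size}(e)$). A program is $\mathbf{int\ main}(\mathbf{int}\ x_1,\dots,\mathbf{int}\ x_m)\{s_1\dots s_k\ \mathbf{return}\ e;\}$. Semantics (big-step). A store $\Sigma$ is a finite partial map from variables to values; $\Sigma[x\mapsto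 v]$ is the update. $\Sigma\vdash e\Downarrow v$: a variable $x\in\mathrm{dom}\,\Sigma$ evaluates to $\Sigma(x)$, constants to their value, $\mathtt{op}(e_1,\dots,e_m)$ to $\mathtt{op}$ applied to the values of the $e_i$. $\Sigma\vdash s\Downarrow\Sigma'$: $t\ x;$ gives $\Sigma[x\mapsto 0]$ if $t\in\mathsf{Int}$ and $\Sigma[x\mapsto\#f]$ if $t=\mathtt{bool}$; $x=e;$ (with $x\in\mathrm{dom}\,\Sigma$) gives $\Sigma[x\mapsto v]$ where $\Sigma\vdash e\Downarrow v$; a sequence or block executes its statements in order threading the store (a block returns the final store); a conditional evaluates its guard to a boolean and executes the corresponding branch; $\mathbf{for}(x<e)\ s$ evaluates $e$ once to an integer $i$, sets $\Sigma_0=\Sigma$, executes $s$ from $\Sigma_j[x\mapsto j]$ obtaining $\Sigma_{j+1}$ for $j=0,\dots,i-1$, and ends in $\Sigma_i$ (i.e. in $\Sigma$ if $i\le 0$). A program on inputs $v_1,\dots,v_m$ runs its statements from the store $[x_1\mapsto v_1,\dots,x_m\mapsto v_m]$ and outputs the value of its return expression in the resulting store. Type system. A typing environment $\Gamma$ is a finite partial map from variables to types; $\ell\in\{\#t,\#f\}$ is the loop indicator. Expression typing $\Gamma,\ell\vdash e:t$: a variable $x\in\mathrm{dom}\,\Gamma$ has type $\Gamma(x)$; digit literals have type $\mathtt{iint}$, $\mathtt{true},\mathtt{false}$ have type $\mathtt{bool}$; $\texttt{!},\texttt{\&\&},\texttt{||}$ take $\mathtt{bool}$ arguments to $\mathtt{bool}$;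 comparisons take arguments with types in $\mathsf{Int}$ to $\mathtt{bool}$; $+,-,/,\%$ take arguments with types in $\mathsf{Int}$ to their supremum under $\preccurlyeq$ ($\mathtt{iint}$ iff all arguments are $\mathtt{iint}$); $\mathtt{size}$ takes only an $\mathtt{iint}$ argument, giving $\mathtt{iint}$; parentheses preserve types. Statement typing $\Gamma,\ell\vdash s:\Gamma'$: $t\ x;$ is typable iff $x\notin\mathrm{dom}\,\Gamma$ and not($\ell=\#t$ and $t=\mathtt{iint}$), giving $\Gamma[x\mapsto t]$; $x=e;$ is typable iff $x\in\mathrm{dom}\,\Gamma$, not($\ell=\#t$ and $\Gamma(x)=\mathtt{iint}$), and $\Gamma,\ell\vdash e:t$ with $t,\Gamma(x)$ both in $\mathsf{Int}$ or both $\mathtt{bool}$, giving $\Gamma$; a sequence $s_1\dots s_m$ threads $\Gamma_0=\Gamma$, $\Gamma_{i-1},\ell\vdash s_i:\Gamma_i$, giving $\Gamma_m$; a block $\{\tilde s\}$ is typable if its sequence is, giving $\Gamma$; a conditional needs a guard of type $\mathtt{bool}$ and both branches typable under $\Gamma,\ell$, giving $\Gamma$; $\mathbf{for}(x<e)\ s$ needs $\Gamma,\ell\vdash e:\mathtt{iint}$, $x\notin\mathrm{dom}\,\Gamma$, and $\Gamma[x\mapsto\mathtt{iint}],\#t\vdash s:\Gamma'$ for some $\Gamma'$, giving $\Gamma$. A program is well-typed if its statements are typable starting from $[x_1\mapsto\mathtt{int},\dots,x_m\mapsto\mathtt{int}]$ with $\ell=\#f$, ending in some $\Gamma'$, and its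 return expression has a type in $\mathsf{Int}$ under $\Gamma',\#f$. A well-typed program $p$ with $m$ inputs computes a total function $[\![p]\!]:\mathbb Z^m\to\mathbb Z$. Sizes: $\mathrm{sz}(v)=\lceil\log_2(\mathrm{abs}(v)+1)\rceil$ for $v\in\mathbb Z$, and $\mathrm{sz}(v_1,\dots,v_m)=\sum_i\mathrm{sz}(v_i)$. *)

theory Defs
  imports Complex_Main "HOL-Computational_Algebra.Polynomial"
begin

datatype ty = IInt | TInt | TBool

definition is_int_ty :: "ty \<Rightarrow> bool" where
  "is_int_ty t \<longleftrightarrow> t = IInt \<or> t = TInt"

datatype val = VInt int | VBool bool

(* Neg is unary minus, Minus is binary minus *)
datatype oper = Neg | Plus | Minus | Div | Mod | Size
  | Ge | Le | Gt | Lt | Eq | Neq | Not | And | Or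

datatype expr =
    EVar string
  | EConst nat            (* nonempty decimal digit string, denoting a natural number *)
  | ETrue
  | EFalse
  | EOp oper "expr list"
  | EParen expr

(* SFor x e s  stands for  for(x < size(e)) s  (loop bounds are always size(e)) *)
datatype stmt =
    SDecl ty string
  | SAssign string expr
  | SBlock "stmt list"
  | SIf expr stmt stmt
  | SFor string expr stmt

(* int main(int x1,...,int xm) { s1 ... sk return e; } *)
datatype prog = Prog "string list" "stmt list" expr

definition sz :: "int \<Rightarrow> nat" where
  "sz v = nat \<lceil>log 2 (real_of_int (\<bar>v\<bar> + 1))\<rceil>"

definition sz_list :: "int list \<Rightarrow> nat" where
  "sz_list vs = (\<Sum>v\<leftarrow>vs. sz v)"

(* integer division/remainder, truncating toward zero (C convention); by 0 gives 0 *)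
definition tdiv :: "int \<Rightarrow> int \<Rightarrow> int" where
  "tdiv a b = (if b = 0 then 0 else sgn a * sgn b * (\<bar>a\<bar> div \<bar>b\<bar>))"

definition tmod :: "int \<Rightarrow> int \<Rightarrow> int" where
  "tmod a b = (if b = 0 then 0 else a - b * tdiv a b)"

definition apply_op :: "oper \<Rightarrow> val list \<Rightarrow> val option" where
  "apply_op f vs =
    (case vs of
       [VInt a] \<Rightarrow>
         (case f of Neg \<Rightarrow> Some (VInt (- a))
                  | Size \<Rightarrow> Some (VInt (int (sz a)))
                  | _ \<Rightarrow> None)
     | [VBool a] \<Rightarrow> (if f = Not then Some (VBool (\<not> a)) else None)
     | [VInt a, VInt b] \<Rightarrow>
         (case f of Plus \<Rightarrow> Some (VInt (a + b))
                  | Minus \<Rightarrow> Some (VInt (a - b))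
                  | Div \<Rightarrow> Some (VInt (tdiv a b))
                  | Mod \<Rightarrow> Some (VInt (tmod a b))
                  | Ge \<Rightarrow> Some (VBool (a \<ge> b))
                  | Le \<Rightarrow> Some (VBool (a \<le> b))
                  | Gt \<Rightarrow> Some (VBool (a > b))
                  | Lt \<Rightarrow> Some (VBool (a < b))
                  | Eq \<Rightarrow> Some (VBool (a = b))
                  | Neq \<Rightarrow> Some (VBool (a \<noteq> b))
                  | _ \<Rightarrow> None)
     | [VBool a, VBool b] \<Rightarrow>
         (case f of And \<Rightarrow> Some (VBool (a \<and> b))
                  | Or \<Rightarrow> Some (VBool (a \<or> b))
                  | _ \<Rightarrow> None)
     | _ \<Rightarrow> None)"

type_synonym store = "string \<Rightarrow> val option"

inductive eval :: "store \<Rightarrow> expr \<Rightarrow> val \<Rightarrow> bool" where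
  EvVar: "\<Sigma> x = Some v \<Longrightarrow> eval \<Sigma> (EVar x) v"
| EvConst: "eval \<Sigma> (EConst n) (VInt (int n))"
| EvTrue: "eval \<Sigma> ETrue (VBool True)"
| EvFalse: "eval \<Sigma> EFalse (VBool False)"
| EvOp: "list_all2 (eval \<Sigma>) es vs \<Longrightarrow> apply_op f vs = Some v \<Longrightarrow> eval \<Sigma> (EOp f es) v"
| EvParen: "eval \<Sigma> e v \<Longrightarrow> eval \<Sigma> (EParen e) v"
monos list_all2_mono

definition default_val :: "ty \<Rightarrow> val" where
  "default_val t = (if t = TBool then VBool False else VInt 0)"

(* exec: statements; exec_seq: sequences; exec_loop x s i j \<Sigma>_j \<Sigma>_i: remaining loop
   iterations j, ..., i-1 *)
inductive exec :: "store \<Rightarrow> stmt \<Rightarrow> store \<Rightarrow> bool"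
  and exec_seq :: "store \<Rightarrow> stmt list \<Rightarrow> store \<Rightarrow> bool"
  and exec_loop :: "string \<Rightarrow> stmt \<Rightarrow> int \<Rightarrow> int \<Rightarrow> store \<Rightarrow> store \<Rightarrow> bool" where
  ExDecl: "exec \<Sigma> (SDecl t x) (\<Sigma>(x \<mapsto> default_val t))"
| ExAssign: "x \<in> dom \<Sigma> \<Longrightarrow> eval \<Sigma> e v \<Longrightarrow> exec \<Sigma> (SAssign x e) (\<Sigma>(x \<mapsto> v))"
| ExBlock: "exec_seq \<Sigma> ss \<Sigma>' \<Longrightarrow> exec \<Sigma> (SBlock ss) \<Sigma>'"
| ExIfT: "eval \<Sigma> e (VBool True) \<Longrightarrow> exec \<Sigma> s1 \<Sigma>' \<Longrightarrow> exec \<Sigma> (SIf e s1 s2) \<Sigma>'"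
| ExIfF: "eval \<Sigma> e (VBool False) \<Longrightarrow> exec \<Sigma> s2 \<Sigma>' \<Longrightarrow> exec \<Sigma> (SIf e s1 s2) \<Sigma>'"
| ExFor: "eval \<Sigma> (EOp Size [e]) (VInt i) \<Longrightarrow> exec_loop x s i 0 \<Sigma> \<Sigma>' \<Longrightarrow>
          exec \<Sigma> (SFor x e s) \<Sigma>'"
| SeqNil: "exec_seq \<Sigma> [] \<Sigma>"
| SeqCons: "exec \<Sigma> s \<Sigma>1 \<Longrightarrow> exec_seq \<Sigma>1 ss \<Sigma>' \<Longrightarrow> exec_seq \<Sigma> (s # ss) \<Sigma>'"
| LoopDone: "\<not> j < i \<Longrightarrow> exec_loop x s i j \<Sigma> \<Sigma>"
| LoopStep: "j < i \<Longrightarrow> exec (\<Sigma>(x \<mapsto> VInt j)) s \<Sigma>1 \<Longrightarrow> exec_loop x s i (j + 1) \<Sigma>1 \<Sigma>' \<Longrightarrow>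
             exec_loop x s i j \<Sigma> \<Sigma>'"

(* prog_sem p vs w: program p on inputs vs outputs w, i.e. [[p]](vs) = w *)
inductive prog_sem :: "prog \<Rightarrow> int list \<Rightarrow> int \<Rightarrow> bool" where
  "length vs = length xs \<Longrightarrow>
   exec_seq (Map.empty(xs [\<mapsto>] map VInt vs)) ss \<Sigma>' \<Longrightarrow>
   eval \<Sigma>' e (VInt w) \<Longrightarrow>
   prog_sem (Prog xs ss e) vs w"

type_synonym tenv = "string \<Rightarrow> ty option"

definition ty_sup :: "ty list \<Rightarrow> ty" where
  "ty_sup ts = (if (\<forall>t\<in>set ts. t = IInt) then IInt else TInt)"

inductive op_typ :: "oper \<Rightarrow> ty list \<Rightarrow> ty \<Rightarrow> bool" where
  "op_typ Not [TBool] TBool"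
| "op_typ And [TBool, TBool] TBool"
| "op_typ Or [TBool, TBool] TBool"
| "c \<in> {Ge, Le, Gt, Lt, Eq, Neq} \<Longrightarrow> is_int_ty t1 \<Longrightarrow> is_int_ty t2 \<Longrightarrow> op_typ c [t1, t2] TBool"
| "c \<in> {Plus, Minus, Div, Mod} \<Longrightarrow> is_int_ty t1 \<Longrightarrow> is_int_ty t2 \<Longrightarrow>
   op_typ c [t1, t2] (ty_sup [t1, t2])"
| "is_int_ty t \<Longrightarrow> op_typ Neg [t] (ty_sup [t])"
| "op_typ Size [IInt] IInt"

inductive etyp :: "tenv \<Rightarrow> bool \<Rightarrow> expr \<Rightarrow> ty \<Rightarrow> bool" where
  TyVar: "\<Gamma> x = Some t \<Longrightarrow> etyp \<Gamma> l (EVar x) t"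
| TyConst: "etyp \<Gamma> l (EConst n) IInt"
| TyTrue: "etyp \<Gamma> l ETrue TBool"
| TyFalse: "etyp \<Gamma> l EFalse TBool"
| TyOp: "list_all2 (etyp \<Gamma> l) es ts \<Longrightarrow> op_typ f ts t \<Longrightarrow> etyp \<Gamma> l (EOp f es) t"
| TyParen: "etyp \<Gamma> l e t \<Longrightarrow> etyp \<Gamma> l (EParen e) t"
monos list_all2_mono

definition compat :: "ty \<Rightarrow> ty \<Rightarrow> bool" where
  "compat t t' \<longleftrightarrow> (is_int_ty t \<and> is_int_ty t') \<or> (t = TBool \<and> t' = TBool)"

inductive styp :: "tenv \<Rightarrow> bool \<Rightarrow> stmt \<Rightarrow> tenv \<Rightarrow> bool"
  and styp_seq :: "tenv \<Rightarrow> bool \<Rightarrow> stmt list \<Rightarrow> tenv \<Rightarrow> bool" where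
  TsDecl: "x \<notin> dom \<Gamma> \<Longrightarrow> \<not> (l \<and> t = IInt) \<Longrightarrow> styp \<Gamma> l (SDecl t x) (\<Gamma>(x \<mapsto> t))"
| TsAssign: "\<Gamma> x = Some tx \<Longrightarrow> \<not> (l \<and> tx = IInt) \<Longrightarrow> etyp \<Gamma> l e t \<Longrightarrow> compat t tx \<Longrightarrow>
             styp \<Gamma> l (SAssign x e) \<Gamma>"
| TsBlock: "styp_seq \<Gamma> l ss \<Gamma>' \<Longrightarrow> styp \<Gamma> l (SBlock ss) \<Gamma>"
| TsIf: "etyp \<Gamma> l e TBool \<Longrightarrow> styp \<Gamma> l s1 \<Gamma>1 \<Longrightarrow> styp \<Gamma> l s2 \<Gamma>2 \<Longrightarrow>
         styp \<Gamma> l (SIf e s1 s2) \<Gamma>"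
| TsFor: "etyp \<Gamma> l (EOp Size [e]) IInt \<Longrightarrow> x \<notin> dom \<Gamma> \<Longrightarrow> styp (\<Gamma>(x \<mapsto> IInt)) True s \<Gamma>' \<Longrightarrow>
          styp \<Gamma> l (SFor x e s) \<Gamma>"
| TsNil: "styp_seq \<Gamma> l [] \<Gamma>"
| TsCons: "styp \<Gamma> l s \<Gamma>1 \<Longrightarrow> styp_seq \<Gamma>1 l ss \<Gamma>' \<Longrightarrow> styp_seq \<Gamma> l (s # ss) \<Gamma>'"

inductive well_typed :: "prog \<Rightarrow> bool" where
  "styp_seq (Map.empty(xs [\<mapsto>] replicate (length xs) TInt)) False ss \<Gamma>' \<Longrightarrow>
   etyp \<Gamma>' False e t \<Longrightarrow> is_int_ty t \<Longrightarrow> well_typed (Prog xs ss e)"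

end

theory Submission
  imports Defs
begin

lemma sz_le_iff: "sz v \<le> n \<longleftrightarrow> \<bar>v\<bar> < 2 ^ n"
proof -
  have pos: "0 < real_of_int (\<bar>v\<bar> + 1)" by simp
  have "sz v \<le> n \<longleftrightarrow> log 2 (real_of_int (\<bar>v\<bar> + 1)) \<le> real n"
    unfolding sz_def by (simp add: ceiling_le_iff nat_le_iff)
  also have "\<dots> \<longleftrightarrow> real_of_int (\<bar>v\<bar> + 1) \<le> 2 powr real n"
    using log_le_iff[OF _ pos] by simp
  also have "\<dots> \<longleftrightarrow> real_of_int (\<bar>v\<bar> + 1) \<le> real_of_int (2 ^ n)"
    by (simp add: powr_realpow)
  also have "\<dots> \<longleftrightarrow> \<bar>v\<bar> < 2 ^ n" by linarith
  finally show ?thesis .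
qed

lemma sz_lt: "\<bar>v\<bar> < 2 ^ sz v"
  using sz_le_iff by blast

lemma sz_mono: "\<bar>a\<bar> \<le> \<bar>b\<bar> \<Longrightarrow> sz a \<le> sz b"
  using sz_le_iff sz_lt by (meson le_less_trans)

lemma sz_0[simp]: "sz 0 = 0"
  using sz_le_iff[of 0 0] by simp

lemma nat_lt_pow2: "int n < 2 ^ n"
proof -
  have "n < 2 ^ n" by (rule less_exp)
  then show ?thesis by (metis of_nat_less_iff of_nat_numeral of_nat_power)
qed

lemma sz_nat_le: "sz (int n) \<le> n"
  using sz_le_iff nat_lt_pow2 by simp

lemma tdiv_abs: "\<bar>tdiv a b\<bar> \<le> \<bar>a\<bar>"
proof (cases "b = 0")
  case True then show ?thesis by (simp add: tdiv_def)
next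
  case False
  have "\<bar>tdiv a b\<bar> = \<bar>sgn a * sgn b\<bar> * (\<bar>a\<bar> div \<bar>b\<bar>)"
  proof -
    have nn0: "\<bar>\<bar>a\<bar> div \<bar>b\<bar>\<bar> = \<bar>a\<bar> div \<bar>b\<bar>" by (rule abs_of_nonneg) (simp add: div_int_pos_iff)
    show ?thesis using False nn0 by (simp add: tdiv_def abs_mult)
  qed
  also have "\<dots> \<le> \<bar>a\<bar> div \<bar>b\<bar>"
  proof -
    have nn: "0 \<le> \<bar>a\<bar> div \<bar>b\<bar>" by (simp add: div_int_pos_iff)
    show ?thesis using nn by (simp add: abs_mult abs_sgn_eq mult_le_one)
  qed
  also have "\<dots> \<le> \<bar>a\<bar>" by (cases "a = 0") (simp_all add: int_div_le_self)
  finally show ?thesis .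
qed

lemma tmod_abs: "\<bar>tmod a b\<bar> \<le> \<bar>a\<bar>"
proof (cases "b = 0")
  case True then show ?thesis by (simp add: tmod_def)
next
  case False
  have bs: "b * sgn b = \<bar>b\<bar>" by (simp add: sgn_if)
  have "tmod a b = a - sgn a * (\<bar>b\<bar> * (\<bar>a\<bar> div \<bar>b\<bar>))"
    using False by (simp add: tmod_def tdiv_def bs mult.commute mult.left_commute)
  also have "\<dots> = sgn a * (\<bar>a\<bar> - \<bar>b\<bar> * (\<bar>a\<bar> div \<bar>b\<bar>))"
    by (simp add: algebra_simps abs_mult_sgn)
  also have "\<bar>a\<bar> - \<bar>b\<bar> * (\<bar>a\<bar> div \<bar>b\<bar>) = \<bar>a\<bar> mod \<bar>b\<bar>"
    by (simp add: minus_mult_div_eq_mod)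
  finally have "\<bar>tmod a b\<bar> = \<bar>sgn a\<bar> * (\<bar>a\<bar> mod \<bar>b\<bar>)"
    using False by (simp add: abs_mult)
  also have "\<dots> \<le> \<bar>a\<bar> mod \<bar>b\<bar>"
    by (simp add: abs_sgn_eq mult_le_one)
  also have "\<dots> \<le> \<bar>a\<bar>" by (simp add: zmod_le_nonneg_dividend)
  finally show ?thesis .
qed

lemma apply_op_int_cases:
  assumes "apply_op f vs = Some (VInt i)"
  shows "(\<exists>a. vs = [VInt a] \<and> (i = -a \<or> i = int (sz a))) \<or>
         (\<exists>a b. vs = [VInt a, VInt b] \<and> (i = a+b \<or> i = a-b \<or> i = tdiv a b \<or> i = tmod a b))"
  using assms
  by (auto simp: apply_op_def split: list.splits val.splits oper.splits if_splits)

lemma apply_op_sz: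
  assumes "apply_op f vs = Some (VInt i)" "\<And>a. VInt a \<in> set vs \<Longrightarrow> sz a \<le> p"
  shows "sz i \<le> Suc p"
proof -
  have B: "\<And>a. VInt a \<in> set vs \<Longrightarrow> \<bar>a\<bar> < 2 ^ p" using assms(2) sz_le_iff by blast
  have p2: "(2::int) ^ Suc p = 2 * 2 ^ p" by simp
  have pp: "(2::int) ^ p \<le> 2 ^ Suc p" by simp
  have c1: "\<bar>i\<bar> < 2 ^ Suc p" if vs: "vs = [VInt a]" and i: "i = -a \<or> i = int (sz a)" for a
  proof -
    have a: "\<bar>a\<bar> < 2 ^ p" using B vs by simp
    have "sz a \<le> p" using assms(2) vs by simp
    then have "int (sz a) < 2 ^ Suc p" using nat_lt_pow2[of "sz a"]
      by (smt (verit, best) le_imp_power_dvd of_nat_mono pp zdvd_imp_le zero_less_numeral zero_less_power nat_lt_pow2 of_nat_less_iff)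
    then show ?thesis using i a pp by auto
  qed
  have c2: "\<bar>i\<bar> < 2 ^ Suc p" if vs: "vs = [VInt a, VInt b]" and
      i: "i = a+b \<or> i = a-b \<or> i = tdiv a b \<or> i = tmod a b" for a b
  proof -
    have a: "\<bar>a\<bar> < 2 ^ p" and b: "\<bar>b\<bar> < 2 ^ p" using B vs by auto
    show ?thesis using i a b pp p2 tdiv_abs[of a b] tmod_abs[of a b] by auto
  qed
  have "\<bar>i\<bar> < 2 ^ Suc p" using apply_op_int_cases[OF assms(1)] c1 c2 by blast
  then show ?thesis using sz_le_iff by blast
qed
fun vty :: "val \<Rightarrow> ty \<Rightarrow> bool" where
  "vty (VInt _) t = is_int_ty t"
| "vty (VBool _) t = (t = TBool)"

fun E :: "expr \<Rightarrow> nat" where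
  "E (EVar x) = 0"
| "E (EConst n) = sz (int n)"
| "E ETrue = 0"
| "E EFalse = 0"
| "E (EOp f es) = Suc (sum_list (map E es))"
| "E (EParen e) = E e"

definition Inv :: "tenv \<Rightarrow> store \<Rightarrow> nat \<Rightarrow> nat \<Rightarrow> bool" where
  "Inv \<Gamma> \<Sigma> k m \<longleftrightarrow>
     (\<forall>x t. \<Gamma> x = Some t \<longrightarrow> (\<exists>v. \<Sigma> x = Some v \<and> vty v t)) \<and>
     (\<forall>x i. \<Gamma> x = Some IInt \<longrightarrow> \<Sigma> x = Some (VInt i) \<longrightarrow> sz i \<le> k) \<and>
     (\<forall>x i. \<Sigma> x = Some (VInt i) \<longrightarrow> sz i \<le> m)"

lemma Inv_mono: "Inv \<Gamma> \<Sigma> k m \<Longrightarrow> k \<le> k' \<Longrightarrow> m \<le> m' \<Longrightarrow> Inv \<Gamma> \<Sigma> k' m'"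
  unfolding Inv_def by (meson order_trans)

lemma Inv_sub: "Inv \<Gamma>' \<Sigma> k m \<Longrightarrow> \<Gamma> \<subseteq>\<^sub>m \<Gamma>' \<Longrightarrow> Inv \<Gamma> \<Sigma> k m"
  unfolding Inv_def map_le_def by (metis domI)

lemma Inv_upd:
  assumes "Inv \<Gamma> \<Sigma> k m" "vty v t" "\<And>i. v = VInt i \<Longrightarrow> sz i \<le> m"
    "t = IInt \<Longrightarrow> (\<And>i. v = VInt i \<Longrightarrow> sz i \<le> k)"
  shows "Inv (\<Gamma>(x \<mapsto> t)) (\<Sigma>(x \<mapsto> v)) k m"
  using assms unfolding Inv_def by auto

lemma op_typ_vty:
  assumes "op_typ f ts t" "list_all2 vty vs ts" "apply_op f vs = Some v"
  shows "vty v t"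
  using assms
  by (cases rule: op_typ.cases)
     (auto simp: apply_op_def is_int_ty_def ty_sup_def list_all2_Cons2
       split: list.splits val.splits oper.splits if_splits)

lemma op_typ_iint: "op_typ f ts IInt \<Longrightarrow> t \<in> set ts \<Longrightarrow> t = IInt"
  by (auto elim!: op_typ.cases simp: ty_sup_def split: if_splits)

lemma eval_bound:
  "eval \<Sigma> e v \<Longrightarrow> etyp \<Gamma> l e t \<Longrightarrow> Inv \<Gamma> \<Sigma> k m \<Longrightarrow>
    vty v t \<and> (\<forall>i. v = VInt i \<longrightarrow> sz i \<le> m + E e) \<and>
    (t = IInt \<longrightarrow> (\<forall>i. v = VInt i \<longrightarrow> sz i \<le> k + E e))"
proof (induction arbitrary: t rule: eval.induct)
  case (EvVar \<Sigma> x v)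
  from EvVar.prems(1) have g: "\<Gamma> x = Some t" by (cases rule: etyp.cases) auto
  then show ?case using EvVar.hyps EvVar.prems(2) unfolding Inv_def by fastforce
next
  case (EvConst \<Sigma> n)
  then show ?case by (auto elim: etyp.cases simp: is_int_ty_def)
next
  case (EvTrue \<Sigma>)
  then show ?case by (auto elim: etyp.cases)
next
  case (EvFalse \<Sigma>)
  then show ?case by (auto elim: etyp.cases)
next
  case (EvOp \<Sigma> es vs f v)
  from EvOp.prems(1) obtain ts where ts: "list_all2 (etyp \<Gamma> l) es ts" "op_typ f ts t"
    by (auto elim: etyp.cases)
  define S where "S = sum_list (map E es)"
  have len: "length vs = length es" "length ts = length es"
    using EvOp.IH ts(1) by (auto dest: list_all2_lengthD)
  have each: "vty (vs!j) (ts!j) \<and> (\<forall>i. vs!j = VInt i \<longrightarrow> sz i \<le> m + S) \<and>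
     (ts!j = IInt \<longrightarrow> (\<forall>i. vs!j = VInt i \<longrightarrow> sz i \<le> k + S))" if j: "j < length es" for j
  proof -
    have ev: "eval \<Sigma> (es!j) (vs!j)" and ih: "\<And>t. etyp \<Gamma> l (es!j) t \<Longrightarrow> Inv \<Gamma> \<Sigma> k m \<Longrightarrow>
      vty (vs!j) t \<and> (\<forall>i. vs!j = VInt i \<longrightarrow> sz i \<le> m + E (es!j)) \<and>
      (t = IInt \<longrightarrow> (\<forall>i. vs!j = VInt i \<longrightarrow> sz i \<le> k + E (es!j)))"
      using EvOp.IH j len by (auto simp: list_all2_conv_all_nth)
    have ty: "etyp \<Gamma> l (es!j) (ts!j)" using ts(1) j by (auto simp: list_all2_conv_all_nth)
    have le: "E (es!j) \<le> S" unfolding S_def using j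
      by (metis elem_le_sum_list length_map nth_map)
    show ?thesis using ih[OF ty EvOp.prems(2)] le by fastforce
  qed
  have vt: "list_all2 vty vs ts" using each len by (auto simp: list_all2_conv_all_nth)
  have A: "vty v t" using op_typ_vty[OF ts(2) vt EvOp.hyps] .
  have B: "sz i \<le> m + E (EOp f es)" if "v = VInt i" for i
  proof -
    have "sz i \<le> Suc (m + S)"
      by (rule apply_op_sz[of f vs]) (use EvOp.hyps that each len in \<open>auto simp: in_set_conv_nth\<close>)
    then show ?thesis by (simp add: S_def)
  qed
  have C: "sz i \<le> k + E (EOp f es)" if "v = VInt i" "t = IInt" for i
  proof -
    have tsI: "ts!j = IInt" if "j < length es" for j
      using op_typ_iint[OF ts(2)[unfolded \<open>t = IInt\<close>]] that len by auto
    have "sz i \<le> Suc (k + S)"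
      by (rule apply_op_sz[of f vs]) (use EvOp.hyps that each len tsI in \<open>auto simp: in_set_conv_nth\<close>)
    then show ?thesis by (simp add: S_def)
  qed
  show ?case using A B C by blast
next
  case (EvParen \<Sigma> e v)
  then show ?case by (auto elim: etyp.cases)
qed
inductive_cases ExDeclE: "exec \<Sigma> (SDecl t x) \<Sigma>'"
inductive_cases ExAssignE: "exec \<Sigma> (SAssign x e) \<Sigma>'"
inductive_cases ExBlockE: "exec \<Sigma> (SBlock ss) \<Sigma>'"
inductive_cases ExIfE: "exec \<Sigma> (SIf e s1 s2) \<Sigma>'"
inductive_cases ExForE: "exec \<Sigma> (SFor x e s) \<Sigma>'"
inductive_cases SeqNilE: "exec_seq \<Sigma> [] \<Sigma>'"
inductive_cases SeqConsE: "exec_seq \<Sigma> (s # ss) \<Sigma>'"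

lemma styp_mono:
  "styp \<Gamma> l s \<Gamma>' \<Longrightarrow> \<Gamma> \<subseteq>\<^sub>m \<Gamma>'"
  "styp_seq \<Gamma> l ss \<Gamma>' \<Longrightarrow> \<Gamma> \<subseteq>\<^sub>m \<Gamma>'"
  by (induction rule: styp_styp_seq.inducts)
     (auto simp: map_le_def, metis domI)

lemma loop_induct[consumes 1, case_names Done Step]:
  assumes "exec_loop x s i j \<Sigma> \<Sigma>'"
    "\<And>j \<Sigma>. \<not> j < i \<Longrightarrow> P j \<Sigma> \<Sigma>"
    "\<And>j \<Sigma> \<Sigma>1 \<Sigma>'. j < i \<Longrightarrow> exec (\<Sigma>(x \<mapsto> VInt j)) s \<Sigma>1 \<Longrightarrow>
        exec_loop x s i (j+1) \<Sigma>1 \<Sigma>' \<Longrightarrow> P (j+1) \<Sigma>1 \<Sigma>' \<Longrightarrow> P j \<Sigma> \<Sigma>'"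
  shows "P j \<Sigma> \<Sigma>'"
proof -
  have "exec_loop x' s' i' j \<Sigma> \<Sigma>' \<Longrightarrow> x' = x \<longrightarrow> s' = s \<longrightarrow> i' = i \<longrightarrow> P j \<Sigma> \<Sigma>'" for x' s' i'
    by (induction rule: exec_exec_seq_exec_loop.inducts(3)[where ?P1.0="\<lambda>_ _ _. True" and ?P2.0="\<lambda>_ _ _. True"])
       (auto intro: assms(2,3))
  then show ?thesis using assms(1) by blast
qed
lemma sz_nonneg_le: "0 \<le> j \<Longrightarrow> j < int K \<Longrightarrow> sz j \<le> K"
  using sz_nat_le[of "nat j"] by simp

lemma loop_bound:
  assumes "exec_loop x s i j \<Sigma> \<Sigma>'"
    and body: "\<forall>\<Sigma> \<Sigma>'. exec \<Sigma> s \<Sigma>' \<longrightarrow>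
        (\<forall>k m. Inv \<Gamma>x \<Sigma> k m \<longrightarrow> Inv \<Gamma>b \<Sigma>' k (m + cb*(k+1)^db) \<and>
        (\<forall>y. \<Gamma>x y = Some IInt \<longrightarrow> \<Sigma>' y = \<Sigma> y))"
    and gx: "\<Gamma>x = \<Gamma>(x \<mapsto> IInt)" and sub: "\<Gamma>x \<subseteq>\<^sub>m \<Gamma>b" and xn: "x \<notin> dom \<Gamma>"
    and iK: "i \<le> int K" and kK: "kk \<le> K"
  shows "0 \<le> j \<Longrightarrow> Inv \<Gamma> \<Sigma> kk mj \<Longrightarrow>
    Inv \<Gamma> \<Sigma>' kk (mj + nat (i - j) * (K + cb*(K+1)^db)) \<and> (\<forall>y. \<Gamma> y = Some IInt \<longrightarrow> \<Sigma>' y = \<Sigma> y)"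
  using assms(1)
proof (induction arbitrary: mj rule: loop_induct)
  case (Done j \<Sigma>)
  then show ?case using Inv_mono by auto
next
  case (Step j \<Sigma> \<Sigma>1 \<Sigma>')
  define \<delta> where "\<delta> = K + cb*(K+1)^db"
  have sj: "sz j \<le> K" using Step iK by (intro sz_nonneg_le) auto
  have inv0: "Inv \<Gamma> \<Sigma> K (mj + K)" using Step.prems(2) kK Inv_mono by fastforce
  have e1: "Inv \<Gamma>x (\<Sigma>(x \<mapsto> VInt j)) K (mj + K)"
    unfolding gx by (rule Inv_upd[OF inv0]) (use sj in \<open>auto simp: is_int_ty_def\<close>)
  have b1: "Inv \<Gamma>b \<Sigma>1 K (mj + K + cb*(K+1)^db)" and
       p1: "\<forall>y. \<Gamma>x y = Some IInt \<longrightarrow> \<Sigma>1 y = (\<Sigma>(x \<mapsto> VInt j)) y"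
    using body Step.hyps(2) e1 by blast+
  have "\<Gamma> \<subseteq>\<^sub>m \<Gamma>x" using xn gx by (auto simp: map_le_def)
  then have gsub: "\<Gamma> \<subseteq>\<^sub>m \<Gamma>b" using sub by (rule map_le_trans)
  have b2: "Inv \<Gamma> \<Sigma>1 K (mj + \<delta>)" using Inv_sub[OF b1 gsub] by (simp add: \<delta>_def add.assoc)
  have pres1: "\<forall>y. \<Gamma> y = Some IInt \<longrightarrow> \<Sigma>1 y = \<Sigma> y"
    using p1 xn gx by (auto simp: domI)
  have b3: "Inv \<Gamma> \<Sigma>1 kk (mj + \<delta>)"
    using b2 pres1 Step.prems(2) unfolding Inv_def by metis
  have ih: "Inv \<Gamma> \<Sigma>' kk (mj + \<delta> + nat (i - (j+1)) * \<delta>) \<and> (\<forall>y. \<Gamma> y = Some IInt \<longrightarrow> \<Sigma>' y = \<Sigma>1 y)"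
    using Step.IH[of "mj + \<delta>"] Step.prems(1) b3 by (simp add: \<delta>_def)
  have eq: "mj + \<delta> + nat (i - (j+1)) * \<delta> = mj + nat (i - j) * \<delta>"
  proof -
    have "nat (i - j) = Suc (nat (i - (j+1)))" using Step.hyps(1) by linarith
    then show ?thesis by simp
  qed
  have "Inv \<Gamma> \<Sigma>' kk (mj + nat (i - j) * \<delta>) \<and> (\<forall>y. \<Gamma> y = Some IInt \<longrightarrow> \<Sigma>' y = \<Sigma> y)"
    using ih pres1 unfolding eq by auto
  then show ?case unfolding \<delta>_def .
qed

lemma bnd_mono: "(c::nat) \<le> c' \<Longrightarrow> d \<le> d' \<Longrightarrow> c*(k+1)^d \<le> c'*(k+1)^d'"
  by (intro mult_mono power_increasing) auto

lemma loop_arith: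
  fixes K k e n cb db :: nat
  assumes "K \<le> k + e" "n \<le> K"
  shows "n*(K + cb*(K+1)^db) \<le> (cb+1)*(e+1)^(db+2)*(k+1)^(db+2)"
proof -
  have a: "K + cb*(K+1)^db \<le> (cb+1)*(K+1)^(db+1)"
  proof -
    have "K \<le> (K+1)^(db+1)"
      by (metis add.commute le_add1 plus_1_eq_Suc self_le_power zero_less_Suc le_trans)
    moreover have "cb*(K+1)^db \<le> cb*(K+1)^(db+1)" by (intro mult_le_mono2 power_increasing) auto
    ultimately show ?thesis by (simp add: algebra_simps)
  qed
  have "n*(K + cb*(K+1)^db) \<le> (K+1)*((cb+1)*(K+1)^(db+1))"
    using assms(2) a by (intro mult_le_mono) auto
  also have "\<dots> = (cb+1)*(K+1)^(db+2)" by (simp add: algebra_simps)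
  also have "\<dots> \<le> (cb+1)*((e+1)*(k+1))^(db+2)"
  proof -
    have "K+1 \<le> (e+1)*(k+1)" using assms(1) by (simp add: algebra_simps)
    then show ?thesis by (intro mult_le_mono2 power_mono) auto
  qed
  also have "\<dots> = (cb+1)*(e+1)^(db+2)*(k+1)^(db+2)" by (simp only: power_mult_distrib mult.assoc)
  finally show ?thesis .
qed
definition Good :: "tenv \<Rightarrow> bool \<Rightarrow> (store \<Rightarrow> store \<Rightarrow> bool) \<Rightarrow> tenv \<Rightarrow> bool" where
  "Good \<Gamma> l R \<Gamma>' \<longleftrightarrow> (\<exists>c d::nat. \<forall>\<Sigma> \<Sigma>'. R \<Sigma> \<Sigma>' \<longrightarrow>
     (l \<longrightarrow> (\<forall>k m. Inv \<Gamma> \<Sigma> k m \<longrightarrow> Inv \<Gamma>' \<Sigma>' k (m + c*(k+1)^d) \<and>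
            (\<forall>y. \<Gamma> y = Some IInt \<longrightarrow> \<Sigma>' y = \<Sigma> y))) \<and>
     (\<not> l \<longrightarrow> (\<forall>m. Inv \<Gamma> \<Sigma> m m \<longrightarrow> Inv \<Gamma>' \<Sigma>' (c*(m+1)^d) (c*(m+1)^d))))"

lemma GoodI:
  assumes "\<And>\<Sigma> \<Sigma>' k m. R \<Sigma> \<Sigma>' \<Longrightarrow> l \<Longrightarrow> Inv \<Gamma> \<Sigma> k m \<Longrightarrow>
     Inv \<Gamma>' \<Sigma>' k (m + c*(k+1)^d) \<and> (\<forall>y. \<Gamma> y = Some IInt \<longrightarrow> \<Sigma>' y = \<Sigma> y)"
    "\<And>\<Sigma> \<Sigma>' m. R \<Sigma> \<Sigma>' \<Longrightarrow> \<not> l \<Longrightarrow> Inv \<Gamma> \<Sigma> m m \<Longrightarrow> Inv \<Gamma>' \<Sigma>' (c*(m+1)^d) (c*(m+1)^d)"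
  shows "Good \<Gamma> l R \<Gamma>'"
  unfolding Good_def using assms by blast

lemma vty_default: "vty (default_val t) t"
  by (cases t) (auto simp: default_val_def is_int_ty_def)

lemma vty_compat: "vty v t \<Longrightarrow> compat t tx \<Longrightarrow> vty v tx"
  by (cases v) (auto simp: compat_def is_int_ty_def)

lemma default_sz: "default_val t = VInt i \<Longrightarrow> i = 0"
  by (auto simp: default_val_def split: if_splits)

lemma m_le_bnd: "m \<le> (m::nat) + 1" by simp

lemma for_bound:
  assumes "eval \<Sigma> (EOp Size [e]) (VInt i)" "etyp \<Gamma> l (EOp Size [e]) IInt" "Inv \<Gamma> \<Sigma> kk m"
  shows "0 \<le> i \<and> i \<le> int (kk + E e)"
proof -
  obtain vs where vs: "list_all2 (eval \<Sigma>) [e] vs" "apply_op Size vs = Some (VInt i)"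
    using assms(1) by (cases rule: eval.cases) auto
  obtain ts where ts: "list_all2 (etyp \<Gamma> l) [e] ts" "op_typ Size ts IInt"
    using assms(2) by (cases rule: etyp.cases) auto
  have tsI: "ts = [IInt]" using ts(2) by (cases rule: op_typ.cases) auto
  obtain v where v: "vs = [v]" "eval \<Sigma> e v" using vs(1) by (auto simp: list_all2_Cons1)
  have et: "etyp \<Gamma> l e IInt" using ts(1) tsI by auto
  have bd: "vty v IInt" "\<forall>a. v = VInt a \<longrightarrow> sz a \<le> kk + E e"
    using eval_bound[OF v(2) et assms(3)] by auto
  then obtain a where a: "v = VInt a" by (cases v) auto
  have "i = int (sz a)" using vs(2) v(1) a by (simp add: apply_op_def)
  then show ?thesis using bd a by auto
qed

lemma pow_ge: "(m::nat) \<le> (m+1)^(Suc d)"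
  by (metis add.commute le_add1 plus_1_eq_Suc self_le_power zero_less_Suc le_trans)

lemma main:
  "styp \<Gamma> l s \<Gamma>' \<Longrightarrow> Good \<Gamma> l (\<lambda>\<Sigma> \<Sigma>'. exec \<Sigma> s \<Sigma>') \<Gamma>'"
  "styp_seq \<Gamma> l ss \<Gamma>' \<Longrightarrow> Good \<Gamma> l (\<lambda>\<Sigma> \<Sigma>'. exec_seq \<Sigma> ss \<Sigma>') \<Gamma>'"
proof (induction rule: styp_styp_seq.inducts)
  case (TsDecl x \<Gamma> l t)
  show ?case
  proof (rule GoodI[where c=1 and d=1])
    fix \<Sigma> \<Sigma>' k m assume ex: "exec \<Sigma> (SDecl t x) \<Sigma>'" and l: l and inv: "Inv \<Gamma> \<Sigma> k m"
    have s': "\<Sigma>' = \<Sigma>(x \<mapsto> default_val t)" using ex by (auto elim: ExDeclE)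
    have "Inv (\<Gamma>(x \<mapsto> t)) \<Sigma>' k m" unfolding s'
      by (rule Inv_upd[OF inv vty_default]) (use TsDecl(2) l in \<open>auto dest: default_sz\<close>)
    then have "Inv (\<Gamma>(x \<mapsto> t)) \<Sigma>' k (m + 1*(k+1)^1)" by (rule Inv_mono) auto
    moreover have "\<forall>y. \<Gamma> y = Some IInt \<longrightarrow> \<Sigma>' y = \<Sigma> y" using TsDecl(1) s' by auto
    ultimately show "Inv (\<Gamma>(x \<mapsto> t)) \<Sigma>' k (m + 1*(k+1)^1) \<and>
      (\<forall>y. \<Gamma> y = Some IInt \<longrightarrow> \<Sigma>' y = \<Sigma> y)" by blast
  next
    fix \<Sigma> \<Sigma>' m assume ex: "exec \<Sigma> (SDecl t x) \<Sigma>'" and inv: "Inv \<Gamma> \<Sigma> m m"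
    have s': "\<Sigma>' = \<Sigma>(x \<mapsto> default_val t)" using ex by (auto elim: ExDeclE)
    have "Inv (\<Gamma>(x \<mapsto> t)) \<Sigma>' m m" unfolding s'
      by (rule Inv_upd[OF inv vty_default]) (auto dest: default_sz)
    then show "Inv (\<Gamma>(x \<mapsto> t)) \<Sigma>' (1*(m+1)^1) (1*(m+1)^1)" by (rule Inv_mono) auto
  qed
next
  case (TsAssign \<Gamma> x tx l e t)
  have G: "\<Gamma>(x \<mapsto> tx) = \<Gamma>" using TsAssign(1) by auto
  show ?case
  proof (rule GoodI[where c="E e + 1" and d=1])
    fix \<Sigma> \<Sigma>' k m assume ex: "exec \<Sigma> (SAssign x e) \<Sigma>'" and l: l and inv: "Inv \<Gamma> \<Sigma> k m"
    obtain v where v: "eval \<Sigma> e v" "\<Sigma>' = \<Sigma>(x \<mapsto> v)" using ex by (auto elim: ExAssignE)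
    have txI: "tx \<noteq> IInt" using TsAssign(2) l by auto
    have eb: "vty v t" "\<forall>i. v = VInt i \<longrightarrow> sz i \<le> m + E e"
      using eval_bound[OF v(1) TsAssign(3) inv] by auto
    have "Inv (\<Gamma>(x \<mapsto> tx)) \<Sigma>' k (m + E e)" unfolding v(2)
      by (rule Inv_upd[OF Inv_mono[OF inv order_refl le_add1] vty_compat[OF eb(1) TsAssign(4)]])
         (use eb txI in auto)
    then have "Inv \<Gamma> \<Sigma>' k (m + (E e + 1)*(k+1)^1)" unfolding G by (rule Inv_mono) (auto simp: algebra_simps)
    moreover have "\<forall>y. \<Gamma> y = Some IInt \<longrightarrow> \<Sigma>' y = \<Sigma> y" using TsAssign(1) txI v(2) by auto
    ultimately show "Inv \<Gamma> \<Sigma>' k (m + (E e + 1)*(k+1)^1) \<and>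
      (\<forall>y. \<Gamma> y = Some IInt \<longrightarrow> \<Sigma>' y = \<Sigma> y)" by blast
  next
    fix \<Sigma> \<Sigma>' m assume ex: "exec \<Sigma> (SAssign x e) \<Sigma>'" and inv: "Inv \<Gamma> \<Sigma> m m"
    obtain v where v: "eval \<Sigma> e v" "\<Sigma>' = \<Sigma>(x \<mapsto> v)" using ex by (auto elim: ExAssignE)
    have eb: "vty v t" "\<forall>i. v = VInt i \<longrightarrow> sz i \<le> m + E e"
      using eval_bound[OF v(1) TsAssign(3) inv] by auto
    have "Inv (\<Gamma>(x \<mapsto> tx)) \<Sigma>' (m + E e) (m + E e)" unfolding v(2)
      by (rule Inv_upd[OF Inv_mono[OF inv le_add1 le_add1] vty_compat[OF eb(1) TsAssign(4)]])
         (use eb in auto)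
    then show "Inv \<Gamma> \<Sigma>' ((E e + 1)*(m+1)^1) ((E e + 1)*(m+1)^1)"
      unfolding G by (rule Inv_mono) (auto simp: algebra_simps)
  qed
next
  case (TsBlock \<Gamma> l ss \<Gamma>')
  from TsBlock.IH obtain c d where H: "\<forall>\<Sigma> \<Sigma>'. exec_seq \<Sigma> ss \<Sigma>' \<longrightarrow>
     (l \<longrightarrow> (\<forall>k m. Inv \<Gamma> \<Sigma> k m \<longrightarrow> Inv \<Gamma>' \<Sigma>' k (m + c*(k+1)^d) \<and>
            (\<forall>y. \<Gamma> y = Some IInt \<longrightarrow> \<Sigma>' y = \<Sigma> y))) \<and>
     (\<not> l \<longrightarrow> (\<forall>m. Inv \<Gamma> \<Sigma> m m \<longrightarrow> Inv \<Gamma>' \<Sigma>' (c*(m+1)^d) (c*(m+1)^d)))"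
    unfolding Good_def by blast
  have sub: "\<Gamma> \<subseteq>\<^sub>m \<Gamma>'" using styp_mono(2)[OF TsBlock.hyps] .
  show ?case
  proof (rule GoodI[where c=c and d=d])
    fix \<Sigma> \<Sigma>' k m assume ex: "exec \<Sigma> (SBlock ss) \<Sigma>'" and l: l and inv: "Inv \<Gamma> \<Sigma> k m"
    have "exec_seq \<Sigma> ss \<Sigma>'" using ex by (auto elim: ExBlockE)
    then show "Inv \<Gamma> \<Sigma>' k (m + c*(k+1)^d) \<and>
      (\<forall>y. \<Gamma> y = Some IInt \<longrightarrow> \<Sigma>' y = \<Sigma> y)" using H l inv Inv_sub[OF _ sub] by blast
  next
    fix \<Sigma> \<Sigma>' m assume ex: "exec \<Sigma> (SBlock ss) \<Sigma>'" and l: "\<not> l" and inv: "Inv \<Gamma> \<Sigma> m m"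
    have "exec_seq \<Sigma> ss \<Sigma>'" using ex by (auto elim: ExBlockE)
    then show "Inv \<Gamma> \<Sigma>' (c*(m+1)^d) (c*(m+1)^d)" using H l inv Inv_sub[OF _ sub] by blast
  qed
next
  case (TsIf \<Gamma> l e s1 \<Gamma>1 s2 \<Gamma>2)
  from TsIf.IH(1) obtain c1 d1 where H1: "\<forall>\<Sigma> \<Sigma>'. exec \<Sigma> s1 \<Sigma>' \<longrightarrow>
     (l \<longrightarrow> (\<forall>k m. Inv \<Gamma> \<Sigma> k m \<longrightarrow> Inv \<Gamma>1 \<Sigma>' k (m + c1*(k+1)^d1) \<and>
            (\<forall>y. \<Gamma> y = Some IInt \<longrightarrow> \<Sigma>' y = \<Sigma> y))) \<and>
     (\<not> l \<longrightarrow> (\<forall>m. Inv \<Gamma> \<Sigma> m m \<longrightarrow> Inv \<Gamma>1 \<Sigma>' (c1*(m+1)^d1) (c1*(m+1)^d1)))"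
    unfolding Good_def by blast
  from TsIf.IH(2) obtain c2 d2 where H2: "\<forall>\<Sigma> \<Sigma>'. exec \<Sigma> s2 \<Sigma>' \<longrightarrow>
     (l \<longrightarrow> (\<forall>k m. Inv \<Gamma> \<Sigma> k m \<longrightarrow> Inv \<Gamma>2 \<Sigma>' k (m + c2*(k+1)^d2) \<and>
            (\<forall>y. \<Gamma> y = Some IInt \<longrightarrow> \<Sigma>' y = \<Sigma> y))) \<and>
     (\<not> l \<longrightarrow> (\<forall>m. Inv \<Gamma> \<Sigma> m m \<longrightarrow> Inv \<Gamma>2 \<Sigma>' (c2*(m+1)^d2) (c2*(m+1)^d2)))"
    unfolding Good_def by blast
  have sub1: "\<Gamma> \<subseteq>\<^sub>m \<Gamma>1" using styp_mono(1)[OF TsIf.hyps(2)] .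
  have sub2: "\<Gamma> \<subseteq>\<^sub>m \<Gamma>2" using styp_mono(1)[OF TsIf.hyps(3)] .
  have b1: "c1*(k+1)^d1 \<le> (c1+c2)*(k+1)^(d1+d2)" for k by (rule bnd_mono) auto
  have b2: "c2*(k+1)^d2 \<le> (c1+c2)*(k+1)^(d1+d2)" for k by (rule bnd_mono) auto
  show ?case
  proof (rule GoodI[where c="c1+c2" and d="d1+d2"])
    fix \<Sigma> \<Sigma>' k m assume ex: "exec \<Sigma> (SIf e s1 s2) \<Sigma>'" and l: l and inv: "Inv \<Gamma> \<Sigma> k m"
    have "exec \<Sigma> s1 \<Sigma>' \<or> exec \<Sigma> s2 \<Sigma>'" using ex by (auto elim: ExIfE)
    then show "Inv \<Gamma> \<Sigma>' k (m + (c1+c2)*(k+1)^(d1+d2)) \<and>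
      (\<forall>y. \<Gamma> y = Some IInt \<longrightarrow> \<Sigma>' y = \<Sigma> y)"
    proof
      assume a: "exec \<Sigma> s1 \<Sigma>'"
      have "Inv \<Gamma>1 \<Sigma>' k (m + c1*(k+1)^d1)" "\<forall>y. \<Gamma> y = Some IInt \<longrightarrow> \<Sigma>' y = \<Sigma> y"
        using H1 a l inv by blast+
      then show ?thesis using Inv_sub[OF _ sub1] Inv_mono b1
        by (meson add_left_mono order_refl)
    next
      assume a: "exec \<Sigma> s2 \<Sigma>'"
      have "Inv \<Gamma>2 \<Sigma>' k (m + c2*(k+1)^d2)" "\<forall>y. \<Gamma> y = Some IInt \<longrightarrow> \<Sigma>' y = \<Sigma> y"
        using H2 a l inv by blast+
      then show ?thesis using Inv_sub[OF _ sub2] Inv_mono b2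
        by (meson add_left_mono order_refl)
    qed
  next
    fix \<Sigma> \<Sigma>' m assume ex: "exec \<Sigma> (SIf e s1 s2) \<Sigma>'" and l: "\<not> l" and inv: "Inv \<Gamma> \<Sigma> m m"
    have "exec \<Sigma> s1 \<Sigma>' \<or> exec \<Sigma> s2 \<Sigma>'" using ex by (auto elim: ExIfE)
    then show "Inv \<Gamma> \<Sigma>' ((c1+c2)*(m+1)^(d1+d2)) ((c1+c2)*(m+1)^(d1+d2))"
    proof
      assume a: "exec \<Sigma> s1 \<Sigma>'"
      have "Inv \<Gamma>1 \<Sigma>' (c1*(m+1)^d1) (c1*(m+1)^d1)" using H1 a l inv by blast
      then show ?thesis using Inv_sub[OF _ sub1] Inv_mono b1 by meson
    next
      assume a: "exec \<Sigma> s2 \<Sigma>'"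
      have "Inv \<Gamma>2 \<Sigma>' (c2*(m+1)^d2) (c2*(m+1)^d2)" using H2 a l inv by blast
      then show ?thesis using Inv_sub[OF _ sub2] Inv_mono b2 by meson
    qed
  qed
next
  case (TsFor \<Gamma> l e x s \<Gamma>b)
  from TsFor.IH obtain cb db where H: "\<forall>\<Sigma> \<Sigma>'. exec \<Sigma> s \<Sigma>' \<longrightarrow>
     (\<forall>k m. Inv (\<Gamma>(x \<mapsto> IInt)) \<Sigma> k m \<longrightarrow> Inv \<Gamma>b \<Sigma>' k (m + cb*(k+1)^db) \<and>
            (\<forall>y. (\<Gamma>(x \<mapsto> IInt)) y = Some IInt \<longrightarrow> \<Sigma>' y = \<Sigma> y))"
    unfolding Good_def by auto
  have sub: "\<Gamma>(x \<mapsto> IInt) \<subseteq>\<^sub>m \<Gamma>b" using styp_mono(1)[OF TsFor.hyps(3)] .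
  define c0 where "c0 = (cb+1)*(E e+1)^(db+2)"
  define d where "d = db + 2"
  have run: "Inv \<Gamma> \<Sigma>' kk (m + c0*(kk+1)^d) \<and> (\<forall>y. \<Gamma> y = Some IInt \<longrightarrow> \<Sigma>' y = \<Sigma> y)"
    if ex: "exec \<Sigma> (SFor x e s) \<Sigma>'" and inv: "Inv \<Gamma> \<Sigma> kk m" for \<Sigma> \<Sigma>' kk m
  proof -
    obtain i where i: "eval \<Sigma> (EOp Size [e]) (VInt i)" "exec_loop x s i 0 \<Sigma> \<Sigma>'"
      using ex by (auto elim: ExForE)
    have ib: "0 \<le> i" "i \<le> int (kk + E e)" using for_bound[OF i(1) TsFor.hyps(1) inv] by auto
    have L: "Inv \<Gamma> \<Sigma>' kk (m + nat (i - 0) * ((kk + E e) + cb*((kk + E e)+1)^db)) \<and>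
        (\<forall>y. \<Gamma> y = Some IInt \<longrightarrow> \<Sigma>' y = \<Sigma> y)"
      by (rule loop_bound[OF i(2) H refl sub TsFor.hyps(2) ib(2) le_add1 order_refl inv])
    have "nat (i - 0) * ((kk + E e) + cb*((kk + E e)+1)^db) \<le> (cb+1)*(E e+1)^(db+2)*(kk+1)^(db+2)"
      by (rule loop_arith) (use ib in auto)
    also have "\<dots> = c0*(kk+1)^d" unfolding c0_def d_def by simp
    finally show ?thesis using L Inv_mono by (meson add_left_mono order_refl)
  qed
  show ?case
  proof (rule GoodI[where c="c0+1" and d=d])
    fix \<Sigma> \<Sigma>' k m assume ex: "exec \<Sigma> (SFor x e s) \<Sigma>'" and l: l and inv: "Inv \<Gamma> \<Sigma> k m"
    have "c0*(k+1)^d \<le> (c0+1)*(k+1)^d" by (rule bnd_mono) auto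
    then show "Inv \<Gamma> \<Sigma>' k (m + (c0+1)*(k+1)^d) \<and> (\<forall>y. \<Gamma> y = Some IInt \<longrightarrow> \<Sigma>' y = \<Sigma> y)"
      using run[OF ex inv] Inv_mono by (meson add_left_mono order_refl)
  next
    fix \<Sigma> \<Sigma>' m assume ex: "exec \<Sigma> (SFor x e s) \<Sigma>'" and inv: "Inv \<Gamma> \<Sigma> m m"
    have "m \<le> (m+1)^d" unfolding d_def using pow_ge by (metis add_2_eq_Suc')
    then have le: "m + c0*(m+1)^d \<le> (c0+1)*(m+1)^d" by simp
    moreover have "m \<le> (c0+1)*(m+1)^d" using le by linarith
    ultimately show "Inv \<Gamma> \<Sigma>' ((c0+1)*(m+1)^d) ((c0+1)*(m+1)^d)"
      using run[OF ex inv] Inv_mono by blast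
  qed
next
  case (TsNil \<Gamma> l)
  show ?case
  proof (rule GoodI[where c=1 and d=1])
    fix \<Sigma> \<Sigma>' k m assume ex: "exec_seq \<Sigma> [] \<Sigma>'" and inv: "Inv \<Gamma> \<Sigma> k m"
    have "\<Sigma>' = \<Sigma>" using ex by (auto elim: SeqNilE)
    then show "Inv \<Gamma> \<Sigma>' k (m + 1*(k+1)^1) \<and> (\<forall>y. \<Gamma> y = Some IInt \<longrightarrow> \<Sigma>' y = \<Sigma> y)"
      using inv Inv_mono by auto
  next
    fix \<Sigma> \<Sigma>' m assume ex: "exec_seq \<Sigma> [] \<Sigma>'" and inv: "Inv \<Gamma> \<Sigma> m m"
    have "\<Sigma>' = \<Sigma>" using ex by (auto elim: SeqNilE)
    then show "Inv \<Gamma> \<Sigma>' (1*(m+1)^1) (1*(m+1)^1)" using inv Inv_mono by auto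
  qed
next
  case (TsCons \<Gamma> l s \<Gamma>1 ss \<Gamma>')
  from TsCons.IH(1) obtain c1 d1 where H1: "\<forall>\<Sigma> \<Sigma>'. exec \<Sigma> s \<Sigma>' \<longrightarrow>
     (l \<longrightarrow> (\<forall>k m. Inv \<Gamma> \<Sigma> k m \<longrightarrow> Inv \<Gamma>1 \<Sigma>' k (m + c1*(k+1)^d1) \<and>
            (\<forall>y. \<Gamma> y = Some IInt \<longrightarrow> \<Sigma>' y = \<Sigma> y))) \<and>
     (\<not> l \<longrightarrow> (\<forall>m. Inv \<Gamma> \<Sigma> m m \<longrightarrow> Inv \<Gamma>1 \<Sigma>' (c1*(m+1)^d1) (c1*(m+1)^d1)))"
    unfolding Good_def by blast
  from TsCons.IH(2) obtain c2 d2 where H2: "\<forall>\<Sigma> \<Sigma>'. exec_seq \<Sigma> ss \<Sigma>' \<longrightarrow>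
     (l \<longrightarrow> (\<forall>k m. Inv \<Gamma>1 \<Sigma> k m \<longrightarrow> Inv \<Gamma>' \<Sigma>' k (m + c2*(k+1)^d2) \<and>
            (\<forall>y. \<Gamma>1 y = Some IInt \<longrightarrow> \<Sigma>' y = \<Sigma> y))) \<and>
     (\<not> l \<longrightarrow> (\<forall>m. Inv \<Gamma>1 \<Sigma> m m \<longrightarrow> Inv \<Gamma>' \<Sigma>' (c2*(m+1)^d2) (c2*(m+1)^d2)))"
    unfolding Good_def by blast
  have sub1: "\<Gamma> \<subseteq>\<^sub>m \<Gamma>1" using styp_mono(1)[OF TsCons.hyps(1)] .
  define c where "c = c1 + c2 + c2*(c1+1)^d2"
  define d where "d = d1 + d2 + d1*d2"
  show ?case
  proof (rule GoodI[where c=c and d=d])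
    fix \<Sigma> \<Sigma>' k m assume ex: "exec_seq \<Sigma> (s # ss) \<Sigma>'" and l: l and inv: "Inv \<Gamma> \<Sigma> k m"
    obtain \<Sigma>1 where e1: "exec \<Sigma> s \<Sigma>1" and e2: "exec_seq \<Sigma>1 ss \<Sigma>'" using ex by (auto elim: SeqConsE)
    have i1: "Inv \<Gamma>1 \<Sigma>1 k (m + c1*(k+1)^d1)" and p1: "\<forall>y. \<Gamma> y = Some IInt \<longrightarrow> \<Sigma>1 y = \<Sigma> y"
      using H1 e1 l inv by blast+
    have i2: "Inv \<Gamma>' \<Sigma>' k (m + c1*(k+1)^d1 + c2*(k+1)^d2)" and p2: "\<forall>y. \<Gamma>1 y = Some IInt \<longrightarrow> \<Sigma>' y = \<Sigma>1 y"
      using H2 e2 l i1 by blast+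
    have "c1*(k+1)^d1 \<le> (c1+c2)*(k+1)^d" "c2*(k+1)^d2 \<le> c2*(k+1)^d"
      unfolding d_def by (rule bnd_mono; simp)+
    moreover have "c2*(k+1)^d \<le> c2*(c1+1)^d2*(k+1)^d"
    proof -
      have "1 \<le> (c1+1)^d2" by simp
      then show ?thesis by (simp add: mult_le_mono1 mult_le_mono2)
    qed
    moreover have "c*(k+1)^d = (c1+c2)*(k+1)^d + c2*(c1+1)^d2*(k+1)^d"
      unfolding c_def by (simp add: algebra_simps)
    ultimately have "m + c1*(k+1)^d1 + c2*(k+1)^d2 \<le> m + c*(k+1)^d" by linarith
    then have "Inv \<Gamma>' \<Sigma>' k (m + c*(k+1)^d)" using i2 Inv_mono by blast
    moreover have "\<forall>y. \<Gamma> y = Some IInt \<longrightarrow> \<Sigma>' y = \<Sigma> y" using p1 p2 sub1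
      by (metis map_le_def domI)
    ultimately show "Inv \<Gamma>' \<Sigma>' k (m + c*(k+1)^d) \<and> (\<forall>y. \<Gamma> y = Some IInt \<longrightarrow> \<Sigma>' y = \<Sigma> y)" by blast
  next
    fix \<Sigma> \<Sigma>' m assume ex: "exec_seq \<Sigma> (s # ss) \<Sigma>'" and l: "\<not> l" and inv: "Inv \<Gamma> \<Sigma> m m"
    obtain \<Sigma>1 where e1: "exec \<Sigma> s \<Sigma>1" and e2: "exec_seq \<Sigma>1 ss \<Sigma>'" using ex by (auto elim: SeqConsE)
    define B1 where "B1 = c1*(m+1)^d1"
    have i1: "Inv \<Gamma>1 \<Sigma>1 B1 B1" using H1 e1 l inv unfolding B1_def by blast
    have i2: "Inv \<Gamma>' \<Sigma>' (c2*(B1+1)^d2) (c2*(B1+1)^d2)" using H2 e2 l i1 by blast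
    have "B1 + 1 \<le> (c1+1)*(m+1)^d1" unfolding B1_def
    proof -
      have "1 \<le> (m+1)^d1" by simp
      then show "c1*(m+1)^d1 + 1 \<le> (c1+1)*(m+1)^d1" by (simp add: algebra_simps)
    qed
    then have "c2*(B1+1)^d2 \<le> c2*((c1+1)*(m+1)^d1)^d2" by (intro mult_le_mono2 power_mono) auto
    also have "\<dots> = c2*(c1+1)^d2*(m+1)^(d1*d2)" by (simp only: power_mult_distrib power_mult mult.assoc)
    also have "\<dots> \<le> c*(m+1)^d" unfolding c_def d_def by (rule bnd_mono) auto
    finally show "Inv \<Gamma>' \<Sigma>' (c*(m+1)^d) (c*(m+1)^d)" using i2 Inv_mono by blast
  qed
qed
lemma upds_val: "length xs = length ys \<Longrightarrow> (m(xs [\<mapsto>] ys)) y = Some v \<Longrightarrow> m y = Some v \<or> v \<in> set ys"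
proof (induction xs arbitrary: ys m)
  case Nil then show ?case by simp
next
  case (Cons a xs)
  then obtain b ys' where ys: "ys = b # ys'" by (cases ys) auto
  have "(m(a \<mapsto> b)) y = Some v \<or> v \<in> set ys'"
  proof -
    have h: "((m(a \<mapsto> b))(xs [\<mapsto>] ys')) y = Some v" using Cons.prems ys by simp
    show ?thesis by (rule Cons.IH[OF _ h]) (use Cons.prems ys in simp)
  qed
  then show ?case using ys by (auto split: if_splits)
qed

lemma init_inv:
  assumes len: "length vs = length xs"
  shows "Inv (Map.empty(xs [\<mapsto>] replicate (length xs) TInt)) (Map.empty(xs [\<mapsto>] map VInt vs))
           (sz_list vs) (sz_list vs)"
  unfolding Inv_def
proof (intro conjI allI impI)
  fix y t assume g: "(Map.empty(xs [\<mapsto>] replicate (length xs) TInt)) y = Some t"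
  have tT: "t = TInt" using upds_val[OF _ g] by auto
  have "y \<in> dom (Map.empty(xs [\<mapsto>] replicate (length xs) TInt))" using g by blast
  then have "y \<in> set xs" by (simp add: dom_map_upds)
  then have "y \<in> dom (Map.empty(xs [\<mapsto>] map VInt vs))" using len by (simp add: dom_map_upds)
  then obtain v where v: "(Map.empty(xs [\<mapsto>] map VInt vs)) y = Some v" by blast
  have "v \<in> set (map VInt vs)" using upds_val[OF _ v] len by auto
  then show "\<exists>v. (Map.empty(xs [\<mapsto>] map VInt vs)) y = Some v \<and> vty v t"
    using v tT by (auto simp: is_int_ty_def)
next
  fix y i assume g: "(Map.empty(xs [\<mapsto>] replicate (length xs) TInt)) y = Some IInt"
  then show "(Map.empty(xs [\<mapsto>] map VInt vs)) y = Some (VInt i) \<Longrightarrow> sz i \<le> sz_list vs"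
    using upds_val[OF _ g] by auto
next
  fix y i assume v: "(Map.empty(xs [\<mapsto>] map VInt vs)) y = Some (VInt i)"
  have "VInt i \<in> set (map VInt vs)" using upds_val[OF _ v] len by auto
  then have "i \<in> set vs" by auto
  then show "sz i \<le> sz_list vs" unfolding sz_list_def
    by (simp add: member_le_sum_list)
qed

theorem proposition2:
  assumes "well_typed p"
  shows "\<exists>q :: real poly. \<forall>vs w. prog_sem p vs w \<longrightarrow>
           real (sz w) \<le> poly q (real (sz_list vs))"
proof -
  obtain xs ss e \<Gamma>' t where p: "p = Prog xs ss e"
    and st: "styp_seq (Map.empty(xs [\<mapsto>] replicate (length xs) TInt)) False ss \<Gamma>'"
    and et: "etyp \<Gamma>' False e t"
    using assms by (cases rule: well_typed.cases) auto
  obtain c d where H: "\<forall>\<Sigma> \<Sigma>'. exec_seq \<Sigma> ss \<Sigma>' \<longrightarrow>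
     (\<forall>m. Inv (Map.empty(xs [\<mapsto>] replicate (length xs) TInt)) \<Sigma> m m \<longrightarrow>
        Inv \<Gamma>' \<Sigma>' (c*(m+1)^d) (c*(m+1)^d))"
    using main(2)[OF st] unfolding Good_def by auto
  define q :: "real poly" where "q = smult (real c) ([:1, 1:] ^ d) + [:real (E e):]"
  have "real (sz w) \<le> poly q (real (sz_list vs))" if ps: "prog_sem p vs w" for vs w
  proof -
    obtain \<Sigma>' where len: "length vs = length xs"
      and ex: "exec_seq (Map.empty(xs [\<mapsto>] map VInt vs)) ss \<Sigma>'" and ev: "eval \<Sigma>' e (VInt w)"
      using ps unfolding p by (cases rule: prog_sem.cases) auto
    define N where "N = sz_list vs"
    have "Inv \<Gamma>' \<Sigma>' (c*(N+1)^d) (c*(N+1)^d)"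
      using H ex init_inv[OF len] unfolding N_def by blast
    then have "sz w \<le> c*(N+1)^d + E e" using eval_bound[OF ev et] by blast
    then have "real (sz w) \<le> real (c*(N+1)^d + E e)" by linarith
    also have "\<dots> = poly q (real N)" unfolding q_def by (simp add: poly_power algebra_simps)
    finally show ?thesis unfolding N_def .
  qed
  then show ?thesis by blast
qed

end
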